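(* Let $d$ be a positive integer and $a(z)=\sum_{i\ge0}a_iz^i\in\mathbb{R}[[z]]$ a rational series satisfying (P1), (P2$_d$) and (P3$_d$). Then $$\lim_{z\to1}a(z)(1-z)^d=\lim_{k\to\infty}\frac{(d-1)!}{(d+k-1)!}\frac{\partial^ka}{\partial z^k}(0),$$ the limit on the right existing.
   Context: A rational series is the power series expansion at $z=0$ of a rational function that is regular at $0$; the left-hand limit is taken for the rational function. (P1): the rational function has poles only at roots of unity. (P2$_m$): $z=1$ is a pole of order exactly $m$. (P3$_m$): every pole other than $z=1$ has order less than $m$. *)

theory Defs
  imports "HOL-Analysis.Analysis" "HOL-Computational_Algebra.Computational_Algebra"
begin

text \<open>A rational function is represented as a quotient p/q of real polynomials.
  Its poles are taken over the complex numbers.  The order of the pole of p/q at w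
  is the root multiplicity of w in q minus that in p (0 if this is not positive),
  which is independent of the chosen representation.\<close>

definition cpoly :: "real poly \<Rightarrow> complex poly" where
  "cpoly p = map_poly complex_of_real p"

definition pole_order :: "real poly \<Rightarrow> real poly \<Rightarrow> complex \<Rightarrow> nat" where
  "pole_order p q w = order w (cpoly q) - order w (cpoly p)"

definition is_pole_rat :: "real poly \<Rightarrow> real poly \<Rightarrow> complex \<Rightarrow> bool" where
  "is_pole_rat p q w \<longleftrightarrow> pole_order p q w > 0"

definition P1 :: "real poly \<Rightarrow> real poly \<Rightarrow> bool" where
  "P1 p q \<longleftrightarrow> (\<forall>w. is_pole_rat p q w \<longrightarrow> (\<exists>n>0. w ^ n = 1))"

definition P2 :: "nat \<Rightarrow> real poly \<Rightarrow> real poly \<Rightarrow> bool" where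
  "P2 m p q \<longleftrightarrow> is_pole_rat p q 1 \<and> pole_order p q 1 = m"

definition P3 :: "nat \<Rightarrow> real poly \<Rightarrow> real poly \<Rightarrow> bool" where
  "P3 m p q \<longleftrightarrow> (\<forall>w. w \<noteq> 1 \<and> is_pole_rat p q w \<longrightarrow> pole_order p q w < m)"

end

theory Submission
  imports Defs
begin

lemma cpoly_coeff: "coeff (cpoly p) n = complex_of_real (coeff p n)"
  unfolding cpoly_def by (simp add: coeff_map_poly)

lemma cpoly_mult: "cpoly (p * q) = cpoly p * cpoly q"
  by (rule poly_eqI) (simp add: cpoly_coeff coeff_mult)

lemma cpoly_add: "cpoly (p + q) = cpoly p + cpoly q"
  by (rule poly_eqI) (simp add: cpoly_coeff)

lemma cpoly_diff: "cpoly (p - q) = cpoly p - cpoly q"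
  by (rule poly_eqI) (simp add: cpoly_coeff)

lemma cpoly_1: "cpoly 1 = 1"
  by (rule poly_eqI) (simp add: cpoly_coeff coeff_1)

lemma cpoly_power: "cpoly (p ^ n) = cpoly p ^ n"
  by (induction n) (simp_all add: cpoly_1 cpoly_mult)

lemma cpoly_eq_0: "cpoly p = 0 \<longleftrightarrow> p = 0"
  by (metis cpoly_coeff of_real_eq_0_iff coeff_0 poly_eqI)

lemma degree_cpoly: "degree (cpoly p) = degree p"
  unfolding cpoly_def by (simp add: degree_map_poly)

lemma cpoly_monom: "cpoly (monom c n) = monom (complex_of_real c) n"
  by (rule poly_eqI) (simp add: cpoly_coeff coeff_monom)

lemma cpoly_pCons: "cpoly (pCons a p) = pCons (complex_of_real a) (cpoly p)"
  by (rule poly_eqI) (simp add: cpoly_coeff coeff_pCons split: nat.split)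

lemma cpoly_0: "cpoly 0 = 0"
  by (simp add: cpoly_eq_0)

lemma order_power_gen:
  assumes "(A::'a::idom poly) \<noteq> 0" shows "order w (A ^ n) = n * order w A"
  using assms by (induction n) (simp_all add: order_mult)

lemma order_dvd_crit:
  fixes q P :: "complex poly"
  shows "q \<noteq> 0 \<Longrightarrow> (\<And>w. order w q \<le> order w P) \<Longrightarrow> q dvd P"
proof (induction "degree q" arbitrary: q P rule: less_induct)
  case less
  show ?case
  proof (cases "P = 0")
    case True then show ?thesis by simp
  next
    case Pnz: False
    show ?thesis
    proof (cases "degree q = 0")
      case True
      then have "is_unit q" using less.prems(1) is_unit_iff_degree by blast
      then show ?thesis by (rule unit_imp_dvd)
    next
      case False
      then have "\<not> constant (poly q)" by (subst constant_degree) simp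
      then obtain w where w: "poly q w = 0" using fundamental_theorem_of_algebra by blast
      then have "[:-w,1:] dvd q" by (simp add: poly_eq_0_iff_dvd)
      then obtain q' where q': "q = [:-w,1:] * q'" by (elim dvdE)
      have "order w q \<noteq> 0" using w less.prems(1) order_root by blast
      then have "order w P \<noteq> 0" using less.prems(2)[of w] by linarith
      then have "poly P w = 0" using order_root by blast
      then have "[:-w,1:] dvd P" by (simp add: poly_eq_0_iff_dvd)
      then obtain P' where P': "P = [:-w,1:] * P'" by (elim dvdE)
      have q'nz: "q' \<noteq> 0" using q' less.prems(1) by auto
      have P'nz: "P' \<noteq> 0" using P' Pnz by auto
      have "degree ([:-w,1:] * q') = degree [:-w,1:] + degree q'"
        by (rule degree_mult_eq) (use q'nz in auto)
      then have deg: "degree q' < degree q" using q' by simp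
      have "order v q' \<le> order v P'" for v
      proof -
        have "order v q = order v [:-w,1:] + order v q'"
          unfolding q' by (rule order_mult) (metis less.prems(1) q')
        moreover have "order v P = order v [:-w,1:] + order v P'"
          unfolding P' by (rule order_mult) (metis Pnz P')
        ultimately show ?thesis using less.prems(2)[of v] by linarith
      qed
      then have "q' dvd P'" using less.hyps[OF deg q'nz] by blast
      then show ?thesis unfolding q' P' by (rule mult_dvd_mono[OF dvd_refl])
    qed
  qed
qed

lemma real_dvd_from_cpoly:
  fixes q P :: "real poly"
  assumes "q \<noteq> 0" "cpoly q dvd cpoly P"
  shows "q dvd P"
proof -
  define r where "r = P mod q"
  have "P = q * (P div q) + r" unfolding r_def by simp
  then have "cpoly P = cpoly q * cpoly (P div q) + cpoly r"
    by (metis cpoly_add cpoly_mult)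
  then have "cpoly q dvd cpoly r" using assms(2)
    by (metis dvd_add_right_iff dvd_triv_left)
  show ?thesis
  proof (rule ccontr)
    assume "\<not> q dvd P"
    then have rnz: "r \<noteq> 0" unfolding r_def by (simp add: mod_eq_0_iff_dvd)
    then have "degree r < degree q" unfolding r_def using assms(1) degree_mod_less' by blast
    moreover have "degree (cpoly q) \<le> degree (cpoly r)"
      using \<open>cpoly q dvd cpoly r\<close> rnz by (intro dvd_imp_degree_le) (auto simp: cpoly_eq_0)
    ultimately show False by (simp add: degree_cpoly)
  qed
qed


definition Ef :: "nat \<Rightarrow> nat \<Rightarrow> real fps" where
  "Ef N m = Abs_fps (\<lambda>k. real ((k div N + m) choose m))"

lemma Ef_step:
  assumes "N > 0"
  shows "Ef N (Suc m) * (1 - fps_X ^ N) = Ef N m"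
proof (rule fps_ext)
  fix k
  have e: "(Ef N (Suc m) * (1 - fps_X ^ N)) $ k = Ef N (Suc m) $ k - (if N \<le> k then Ef N (Suc m) $ (k - N) else 0)"
    by (simp only: right_diff_distrib mult_1_right fps_sub_nth fps_X_power_mult_right_nth) (simp add: not_less)
  show "(Ef N (Suc m) * (1 - fps_X ^ N)) $ k = Ef N m $ k"
  proof (cases "N \<le> k")
    case True
    define j where "j = (k - N) div N"
    have "k div N = (k - N + N) div N" using True by simp
    then have kd: "k div N = Suc j" unfolding j_def using assms by simp
    have "(Suc (j + Suc m) choose (Suc m)) = ((j + Suc m) choose m) + ((j + Suc m) choose (Suc m))"
      by (rule binomial_Suc_Suc)
    then have "real (Suc (j + Suc m) choose (Suc m)) - real ((j + Suc m) choose (Suc m)) = real ((j + Suc m) choose m)"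
      by simp
    moreover have "Ef N (Suc m) $ k = real (Suc (j + Suc m) choose (Suc m))" by (simp add: Ef_def kd)
    moreover have "Ef N (Suc m) $ (k - N) = real ((j + Suc m) choose (Suc m))" by (simp add: Ef_def j_def)
    moreover have "Ef N m $ k = real ((j + Suc m) choose m)" by (simp add: Ef_def kd)
    ultimately show ?thesis using True e by simp
  next
    case False
    then have "k div N = 0" by simp
    then show ?thesis using False e
      by (simp add: Ef_def)
  qed
qed

lemma Ef_base: "Ef N 0 * (1 - fps_X) = 1"
proof (rule fps_ext)
  fix k show "(Ef N 0 * (1 - fps_X)) $ k = (1::real fps) $ k"
    by (cases k) (simp_all add: Ef_def right_diff_distrib fps_X_mult_right_nth)
qed

lemma Ef_inv:
  assumes "N > 0"
  shows "Ef N m * ((1 - fps_X) * (1 - fps_X ^ N) ^ m) = 1"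
proof (induction m)
  case 0 then show ?case using Ef_base by simp
next
  case (Suc m)
  have "Ef N (Suc m) * ((1 - fps_X) * (1 - fps_X ^ N) ^ Suc m)
      = (Ef N (Suc m) * (1 - fps_X ^ N)) * ((1 - fps_X) * (1 - fps_X ^ N) ^ m)"
    by (simp add: mult_ac)
  also have "\<dots> = 1" using Suc Ef_step[OF assms] by simp
  finally show ?case .
qed


lemma factor_lim:
  fixes N i :: nat and c :: real
  assumes N: "N > 0" and c: "c \<ge> 1"
  shows "(\<lambda>k. (real ((k - i) div N) + c) / (real k + c)) \<longlonglongrightarrow> 1 / real N"
proof -
  define B where "B = (real N + real i) / real N + c + c / real N"
  have bnd: "\<bar>real ((k - i) div N) - real k / real N\<bar> \<le> (real N + real i) / real N" for k
  proof -
    have a1: "(k - i) div N * N \<le> k" by (meson diff_le_self div_times_less_eq_dividend order_trans)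
    have "k - i < (k - i) div N * N + N" using N
      by (metis add.commute div_mult_mod_eq mod_less_divisor nat_add_left_cancel_less)
    then have a2: "k < (k - i) div N * N + N + i" by linarith
    have r1: "real ((k - i) div N) * real N \<le> real k" using a1 by (metis of_nat_le_iff of_nat_mult)
    have r2: "real k \<le> real ((k - i) div N) * real N + real N + real i" using a2
      by (metis less_imp_le of_nat_add of_nat_le_iff of_nat_mult)
    have "real ((k - i) div N) - real k / real N \<le> 0" using r1 N by (simp add: field_simps)
    moreover have "real k / real N - real ((k - i) div N) \<le> (real N + real i) / real N"
    proof -
      have "real k / real N \<le> (real ((k - i) div N) * real N + real N + real i) / real N"
        using r2 N by (intro divide_right_mono) auto
      also have "\<dots> = real ((k - i) div N) + (real N + real i) / real N"
        using N by (simp add: field_simps)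
      finally show ?thesis by linarith
    qed
    moreover have "0 \<le> (real N + real i) / real N" by simp
    ultimately show ?thesis by linarith
  qed
  have "\<forall>\<^sub>F k in sequentially. norm ((real ((k - i) div N) + c) / (real k + c) - 1 / real N) \<le> B / (real k + c)"
  proof (intro always_eventually allI)
    fix k
    have pos: "real k + c > 0" using c by linarith
    have "(real ((k - i) div N) + c) / (real k + c) - 1 / real N
        = ((real ((k - i) div N) - real k / real N) + (c - c / real N)) / (real k + c)"
    proof -
      have h: "1 / real N = ((real k + c) / real N) / (real k + c)" using pos by simp
      have h2: "(real ((k - i) div N) + c) - (real k + c) / real N = (real ((k - i) div N) - real k / real N) + (c - c / real N)"
        by (simp add: add_divide_distrib algebra_simps)
      show ?thesis unfolding h by (simp only: diff_divide_distrib[symmetric] h2)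
    qed
    moreover have "\<bar>(real ((k - i) div N) - real k / real N) + (c - c / real N)\<bar> \<le> B"
    proof -
      have "\<bar>c - c / real N\<bar> \<le> c + c / real N" using c N by (simp add: abs_le_iff)
      then show ?thesis using bnd[of k] unfolding B_def by linarith
    qed
    ultimately show "norm ((real ((k - i) div N) + c) / (real k + c) - 1 / real N) \<le> B / (real k + c)"
      using pos by (simp add: abs_divide divide_right_mono)
  qed
  moreover have "(\<lambda>k. B / (real k + c)) \<longlonglongrightarrow> 0"
  proof (rule tendsto_divide_0[OF tendsto_const])
    show "filterlim (\<lambda>k. real k + c) at_infinity sequentially"
    proof -
      have "filterlim (\<lambda>k. c + real k) at_top sequentially"
        by (rule filterlim_tendsto_add_at_top[OF tendsto_const filterlim_real_sequentially])
      then show ?thesis by (simp add: add.commute filterlim_at_top_imp_at_infinity)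
    qed
  qed
  ultimately have "(\<lambda>k. (real ((k - i) div N) + c) / (real k + c) - 1 / real N) \<longlonglongrightarrow> 0"
    by (rule Lim_null_comparison)
  then show ?thesis by (simp add: LIM_zero_iff)
qed

lemma binom_poch: "real ((n + m) choose m) = pochhammer (real n + 1) m / fact m"
  by (simp add: binomial_gbinomial gbinomial_pochhammer')

lemma fact_poch: "(fact (k + m) :: real) = fact k * pochhammer (real k + 1) m"
  by (simp add: pochhammer_fact pochhammer_product' add.commute)

lemma ratio_lim:
  fixes N i m :: nat
  assumes N: "N > 0"
  shows "(\<lambda>k. fact m * fact k / fact (k + m) * real (((k - i) div N + m) choose m)) \<longlonglongrightarrow> (1 / real N) ^ m"
proof -
  have eq: "fact m * fact k / fact (k + m) * real (((k - i) div N + m) choose m)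
      = (\<Prod>j<m. (real ((k - i) div N) + (1 + real j)) / (real k + (1 + real j)))" for k
  proof -
    have p: "pochhammer (real k + 1) m > 0" by (intro pochhammer_pos) simp
    have "fact m * fact k / fact (k + m) * real (((k - i) div N + m) choose m)
        = pochhammer (real ((k - i) div N) + 1) m / pochhammer (real k + 1) m"
      unfolding binom_poch[of "(k - i) div N" m] fact_poch[of k m] using p by (simp add: field_simps)
    also have "\<dots> = (\<Prod>j<m. (real ((k - i) div N) + (1 + real j)) / (real k + (1 + real j)))"
      by (simp add: pochhammer_prod prod_dividef atLeast0LessThan add.assoc)
    finally show ?thesis .
  qed
  have "(\<lambda>k. \<Prod>j<m. (real ((k - i) div N) + (1 + real j)) / (real k + (1 + real j))) \<longlonglongrightarrow> (\<Prod>j<m. 1 / real N)"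
    by (intro tendsto_prod factor_lim N) simp
  then show ?thesis unfolding eq by simp
qed


theorem lemma4p3:
  fixes d :: nat and p q :: "real poly" and a :: "real fps"
  assumes "d > 0"
    and "p \<noteq> 0" and "poly q 0 \<noteq> 0"
    and "a = fps_of_poly p / fps_of_poly q"
    and "P1 p q" and "P2 d p q" and "P3 d p q"
  shows "\<exists>L. ((\<lambda>z. poly p z / poly q z * (1 - z) ^ d) \<longlongrightarrow> L) (at_left 1) \<and>
             (\<lambda>k. fact (d - 1) / fact (d + k - 1) * fps_nth ((fps_deriv ^^ k) a) 0)
               \<longlonglongrightarrow> L"
proof -
  note dpos = assms(1) and pnz = assms(2) and q0 = assms(3) and adef = assms(4)
  have qnz: "q \<noteq> 0" using q0 by auto
  have cqnz: "cpoly q \<noteq> 0" and cpnz: "cpoly p \<noteq> 0" using qnz pnz by (simp_all add: cpoly_eq_0)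
  define S where "S = {w. is_pole_rat p q w}"
  have S_sub: "S \<subseteq> {w. poly (cpoly q) w = 0}"
  proof
    fix w assume "w \<in> S"
    then have "order w (cpoly q) \<noteq> 0" unfolding S_def is_pole_rat_def pole_order_def by simp
    then show "w \<in> {w. poly (cpoly q) w = 0}" using order_root by blast
  qed
  have finS: "finite S" using S_sub poly_roots_finite[OF cqnz] finite_subset by blast
  define nf where "nf w = (SOME n::nat. n > 0 \<and> w ^ n = 1)" for w :: complex
  have nf: "nf w > 0 \<and> w ^ nf w = 1" if "w \<in> S" for w
  proof -
    have "\<exists>n::nat. n > 0 \<and> w ^ n = 1" using assms(5) that unfolding P1_def S_def by blast
    then show ?thesis unfolding nf_def by (rule someI_ex)
  qed
  define N where "N = prod nf S"
  have Npos: "N > 0" unfolding N_def using nf by (simp add: prod_pos)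
  have wN: "w ^ N = 1" if "w \<in> S" for w
  proof -
    have "nf w dvd N" unfolding N_def using finS that by (rule dvd_prodI)
    then obtain k where "N = nf w * k" by (elim dvdE)
    then show ?thesis using nf[OF that] by (simp add: power_mult)
  qed
  define D :: "real poly" where "D = [:1, -1:] * (1 - monom 1 N) ^ (d - 1)"
  define U :: "complex poly" where "U = 1 - monom 1 N"
  have cD: "cpoly D = [:1, -1:] * U ^ (d - 1)"
    unfolding D_def U_def cpoly_mult cpoly_power cpoly_diff cpoly_1 cpoly_monom cpoly_pCons cpoly_0 by simp
  have polyU: "poly U w = 1 - w ^ N" for w unfolding U_def by (simp add: poly_monom)
  have Unz: "U \<noteq> 0" using polyU[of 0] Npos by (metis poly_0 power_0_left zero_neq_one diff_zero less_irrefl)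
  have lnz: "[:1, -1:] \<noteq> (0 :: complex poly)" by simp
  have ordD: "order w (cpoly (p * D)) = order w (cpoly p) + order w [:1, -1:] + (d - 1) * order w U" for w
  proof -
    have "cpoly (p * D) = cpoly p * ([:1, -1:] * U ^ (d - 1))" by (simp add: cpoly_mult cD)
    moreover have "cpoly p * ([:1, -1:] * U ^ (d - 1)) \<noteq> 0"
      by (intro no_zero_divisors power_not_zero lnz cpnz Unz)
    moreover have "order w (cpoly p * ([:1, -1:] * U ^ (d - 1))) = order w (cpoly p) + order w ([:1, -1:] * U ^ (d - 1))"
      by (rule order_mult) (intro no_zero_divisors power_not_zero lnz cpnz Unz)
    moreover have "order w ([:1, -1:] * U ^ (d - 1)) = order w [:1, -1:] + order w (U ^ (d - 1))"
      by (rule order_mult) (intro no_zero_divisors power_not_zero lnz cpnz Unz)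
    moreover have "order w (U ^ (d - 1)) = (d - 1) * order w U" by (rule order_power_gen[OF Unz])
    ultimately show ?thesis by simp
  qed
  have ordU: "order w U \<ge> 1" if "w \<in> S" for w
    using polyU[of w] wN[OF that] Unz order_root[of U w] by simp
  have ordl: "order (1::complex) [:1, -1:] \<ge> (1::nat)"
    using order_root[of "[:1, -1:]" "1::complex"] by (simp add: Suc_le_eq)
  have ord_ok: "order w (cpoly q) \<le> order w (cpoly (p * D))" for w
  proof (cases "w \<in> S")
    case False
    then have "order w (cpoly q) \<le> order w (cpoly p)"
      unfolding S_def is_pole_rat_def pole_order_def by simp
    then show ?thesis unfolding ordD by linarith
  next
    case True
    have m1: "(d - 1) * order w U \<ge> d - 1" using ordU[OF True] by simp
    show ?thesis
    proof (cases "w = 1")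
      case True
      then have "pole_order p q w = d" using assms(6) unfolding P2_def by simp
      then have "order 1 (cpoly q) \<le> order 1 (cpoly p) + d" unfolding pole_order_def \<open>w = 1\<close> by linarith
      moreover have "d - 1 \<le> (d - 1) * order 1 U" using m1 \<open>w = 1\<close> by simp
      ultimately show ?thesis unfolding ordD \<open>w = 1\<close> using ordl dpos by linarith
    next
      case False
      then have "pole_order p q w < d" using assms(7) \<open>w \<in> S\<close> unfolding P3_def S_def by simp
      then have "order w (cpoly q) \<le> order w (cpoly p) + (d - 1)" unfolding pole_order_def by linarith
      then show ?thesis unfolding ordD using m1 by linarith
    qed
  qed
  have "cpoly q dvd cpoly (p * D)"
    by (rule order_dvd_crit[OF cqnz ord_ok])
  then have "q dvd p * D" by (rule real_dvd_from_cpoly[OF qnz])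
  then obtain H where H: "p * D = q * H" by (elim dvdE)
  define m where "m = d - 1"
  have dm: "d = Suc m" unfolding m_def using dpos by simp
  have AD: "fps_of_poly D = (1 - fps_X) * (1 - fps_X ^ N) ^ m"
  proof -
    have l: "fps_of_poly [:1, -1:] = (1 - fps_X :: real fps)"
      by (simp add: fps_of_poly_linear' fps_const_neg[symmetric])
    show ?thesis
      unfolding D_def m_def fps_of_poly_mult fps_of_poly_power fps_of_poly_diff fps_of_poly_1 fps_of_poly_monom' l ..
  qed
  have Aq0: "fps_of_poly q $ 0 \<noteq> 0" using q0 by (simp add: poly_0_coeff_0)
  have aD: "a * fps_of_poly D = fps_of_poly H"
  proof -
    have "a * fps_of_poly D = fps_of_poly p * fps_of_poly D * inverse (fps_of_poly q)"
      unfolding adef fps_divide_unit[OF Aq0] by (simp add: mult_ac)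
    also have "\<dots> = fps_of_poly q * fps_of_poly H * inverse (fps_of_poly q)"
      by (metis H fps_of_poly_mult)
    also have "\<dots> = fps_of_poly H * (fps_of_poly q * inverse (fps_of_poly q))"
      by (simp only: mult_ac)
    also have "\<dots> = fps_of_poly H" using inverse_mult_eq_1'[OF Aq0] by simp
    finally show ?thesis .
  qed
  have aHE: "a = fps_of_poly H * Ef N m"
  proof -
    have "a = a * (Ef N m * fps_of_poly D)" unfolding AD using Ef_inv[OF Npos] by simp
    also have "\<dots> = fps_of_poly H * Ef N m" by (simp add: aD[symmetric] mult_ac)
    finally show ?thesis .
  qed
  have coeff_a: "a $ k = (\<Sum>i\<le>degree H. coeff H i * real (((k - i) div N + m) choose m))"
    if "k \<ge> degree H" for k
  proof -
    have "a $ k = (\<Sum>i=0..k. coeff H i * real (((k - i) div N + m) choose m))"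
      unfolding aHE fps_mult_nth by (simp add: Ef_def)
    also have "\<dots> = (\<Sum>i\<le>degree H. coeff H i * real (((k - i) div N + m) choose m))"
    proof (rule sum.mono_neutral_right)
      show "finite {0..k}" by simp
      show "{..degree H} \<subseteq> {0..k}" using that by auto
      show "\<forall>i\<in>{0..k} - {..degree H}. coeff H i * real (((k - i) div N + m) choose m) = 0"
        by (auto simp: coeff_eq_0)
    qed
    finally show ?thesis .
  qed
  define L where "L = poly H 1 * (1 / real N) ^ m"
  have seq: "(\<lambda>k. fact (d - 1) / fact (d + k - 1) * fps_nth ((fps_deriv ^^ k) a) 0) \<longlonglongrightarrow> L"
  proof -
    have lim: "(\<lambda>k. \<Sum>i\<le>degree H. coeff H i * (fact m * fact k / fact (k + m) * real (((k - i) div N + m) choose m)))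
        \<longlonglongrightarrow> (\<Sum>i\<le>degree H. coeff H i * (1 / real N) ^ m)"
      by (intro tendsto_sum tendsto_mult_left ratio_lim Npos)
    have Lsum: "(\<Sum>i\<le>degree H. coeff H i * (1 / real N) ^ m) = L"
      unfolding L_def poly_altdef by (simp add: sum_distrib_right)
    have ev: "\<forall>\<^sub>F k in sequentially.
        (\<Sum>i\<le>degree H. coeff H i * (fact m * fact k / fact (k + m) * real (((k - i) div N + m) choose m)))
        = fact (d - 1) / fact (d + k - 1) * fps_nth ((fps_deriv ^^ k) a) 0"
    proof (rule eventually_mono[OF eventually_ge_at_top[of "degree H"]])
      fix k assume k: "degree H \<le> k"
      have "fact (d - 1) / fact (d + k - 1) * fps_nth ((fps_deriv ^^ k) a) 0
          = fact m / fact (k + m) * (fact k * a $ k)"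
      proof -
        have e1: "d - 1 = m" "d + k - 1 = k + m" using dm by simp_all
        show ?thesis unfolding e1 fps_0th_higher_deriv by simp
      qed
      also have "\<dots> = (\<Sum>i\<le>degree H. coeff H i * (fact m * fact k / fact (k + m) * real (((k - i) div N + m) choose m)))"
        unfolding coeff_a[OF k] sum_distrib_left by (intro sum.cong refl) (simp add: field_simps)
      finally show "(\<Sum>i\<le>degree H. coeff H i * (fact m * fact k / fact (k + m) * real (((k - i) div N + m) choose m)))
        = fact (d - 1) / fact (d + k - 1) * fps_nth ((fps_deriv ^^ k) a) 0" by (rule sym)
    qed
    show ?thesis using Lim_transform_eventually[OF lim ev] unfolding Lsum .
  qed
  define g where "g z = poly H z / (\<Sum>j<N. z ^ j) ^ m" for z :: real
  have g1: "g 1 = L" unfolding g_def L_def by (simp add: power_divide)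
  have "isCont g 1" unfolding g_def using Npos
    by (intro continuous_intros) auto
  then have "(g \<longlongrightarrow> L) (at 1)" using g1 isContD by fastforce
  then have glim: "(g \<longlongrightarrow> L) (at_left 1)" using filterlim_at_split by blast
  have ev_q: "\<forall>\<^sub>F z in at_left (1::real). poly q z \<noteq> 0"
  proof -
    have "\<not> (1::real) islimpt {z. poly q z = 0}" by (rule islimpt_finite[OF poly_roots_finite[OF qnz]])
    then have "\<forall>\<^sub>F z in at (1::real). z \<notin> {z. poly q z = 0}" using islimpt_iff_eventually by blast
    then show ?thesis using eventually_at_split by auto
  qed
  have ev_01: "\<forall>\<^sub>F z in at_left (1::real). 0 < z \<and> z < 1"
    using eventually_at_left_real[of 0 "1::real"] by simp
  have "\<forall>\<^sub>F z in at_left (1::real). g z = poly p z / poly q z * (1 - z) ^ d"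
  proof (rule eventually_mono[OF eventually_conj[OF ev_q ev_01]])
    fix z :: real assume z: "poly q z \<noteq> 0 \<and> 0 < z \<and> z < 1"
    define s where "s = (\<Sum>j<N. z ^ j)"
    have spos: "s > 0" unfolding s_def using Npos z
      by (intro sum_pos) auto
    have "poly (p * D) z = poly (q * H) z" using H by simp
    then have "poly p z * ((1 - z) * (1 - z ^ N) ^ m) = poly q z * poly H z"
      unfolding D_def m_def by (simp add: poly_monom algebra_simps)
    then have "poly p z * ((1 - z) * ((1 - z) * s) ^ m) = poly q z * poly H z"
      unfolding s_def one_diff_power_eq .
    then have e: "poly p z * (1 - z) ^ d * s ^ m = poly q z * poly H z"
      unfolding dm by (simp add: power_mult_distrib mult_ac)
    show "g z = poly p z / poly q z * (1 - z) ^ d"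
      unfolding g_def s_def[symmetric] using e z spos by (simp add: field_simps)
  qed
  then have "((\<lambda>z. poly p z / poly q z * (1 - z) ^ d) \<longlongrightarrow> L) (at_left 1)"
    by (rule Lim_transform_eventually[OF glim])
  then show ?thesis using seq by blast
qed

end
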